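(* Let $d\ge0$ be an integer, let $\mathcal D_d$ be the class of all $d$-degenerate graphs, and let $H$ be a graph. If $H$ is not $d$-degenerate then $\mathrm{ex}(H,\mathcal D_d,n)=0$ for all $n$. If $H$ is $d$-degenerate, then there exist positive real numbers $c_1,c_2$ such that $\mathrm{ex}(H,\mathcal D_d,n)\le c_2n^{\alpha_d(H)}$ for every positive integer $n$ and $\mathrm{ex}(H,\mathcal D_d,n)\ge c_1n^{\alpha_d(H)}$ for all sufficiently large $n$.
   Context: Graphs are finite and simple. A graph is $d$-degenerate if every subgraph has minimum degree at most $d$. $\alpha_d(H)$ is the maximum size of a set of pairwise non-adjacent vertices of $H$ each of degree at most $d$ in $H$. For a class $\mathcal G$ of graphs, $\mathrm{ex}(H,\mathcal G,n)$ is the maximum number of subgraphs isomorphic to $H$ contained in an $n$-vertex graph of $\mathcal G$. *)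

theory Defs
  imports Complex_Main
begin

definition sgraph :: "'a set \<Rightarrow> 'a set set \<Rightarrow> bool" where
  "sgraph V E \<longleftrightarrow> finite V \<and> (\<forall>e\<in>E. e \<subseteq> V \<and> card e = 2)"

definition degree :: "'a set set \<Rightarrow> 'a \<Rightarrow> nat" where
  "degree E v = card {e\<in>E. v \<in> e}"

definition subgraph :: "'a set \<Rightarrow> 'a set set \<Rightarrow> 'a set \<Rightarrow> 'a set set \<Rightarrow> bool" where
  "subgraph V' E' V E \<longleftrightarrow> V' \<subseteq> V \<and> E' \<subseteq> E \<and> sgraph V' E'"

definition degenerate :: "nat \<Rightarrow> 'a set \<Rightarrow> 'a set set \<Rightarrow> bool" where
  "degenerate d V E \<longleftrightarrow>
     (\<forall>V' E'. subgraph V' E' V E \<and> V' \<noteq> {} \<longrightarrow> (\<exists>v\<in>V'. degree E' v \<le> d))"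

definition alpha_d :: "nat \<Rightarrow> 'a set \<Rightarrow> 'a set set \<Rightarrow> nat" where
  "alpha_d d V E = Max {card S | S. S \<subseteq> V \<and> (\<forall>x\<in>S. \<forall>y\<in>S. {x, y} \<notin> E)
                                    \<and> (\<forall>x\<in>S. degree E x \<le> d)}"

definition graph_iso :: "'a set \<Rightarrow> 'a set set \<Rightarrow> 'b set \<Rightarrow> 'b set set \<Rightarrow> bool" where
  "graph_iso V1 E1 V2 E2 \<longleftrightarrow>
     (\<exists>f. bij_betw f V1 V2 \<and> (\<forall>x\<in>V1. \<forall>y\<in>V1. {x, y} \<in> E1 \<longleftrightarrow> {f x, f y} \<in> E2))"

definition num_copies :: "'b set \<Rightarrow> 'b set set \<Rightarrow> 'a set \<Rightarrow> 'a set set \<Rightarrow> nat" where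
  "num_copies VH EH V E =
     card {(V', E'). subgraph V' E' V E \<and> graph_iso VH EH V' E'}"

text \<open>ex(H, D_d, n): maximum number of copies of H in an n-vertex d-degenerate graph.
  Every n-vertex graph is isomorphic to one on vertex set {..<n}, so we maximise over those.\<close>
definition ex_degen :: "'b set \<Rightarrow> 'b set set \<Rightarrow> nat \<Rightarrow> nat \<Rightarrow> nat" where
  "ex_degen VH EH d n =
     Max {num_copies VH EH {..<n} E | E :: nat set set. sgraph {..<n} E \<and> degenerate d {..<n} E}"

end

theory Submission
  imports Defs "HOL-Library.FuncSet"
begin

lemma degree_nbrs:
  assumes "sgraph V E"
  shows "degree E v = card {u. {v,u} \<in> E}"
proof -
  have "bij_betw (\<lambda>u. {v,u}) {u. {v,u} \<in> E} {e\<in>E. v \<in> e}"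
  proof (rule bij_betwI')
    fix x y assume "x \<in> {u. {v,u} \<in> E}" "y \<in> {u. {v,u} \<in> E}"
    then have "card {v,x} = 2" "card {v,y} = 2" using assms unfolding sgraph_def by auto
    then show "({v, x} = {v, y}) = (x = y)" by (metis card_2_iff doubleton_eq_iff)
  next
    fix x assume "x \<in> {u. {v,u} \<in> E}" then show "{v,x} \<in> {e\<in>E. v \<in> e}" by auto
  next
    fix e assume e: "e \<in> {e\<in>E. v \<in> e}"
    then have "card e = 2" using assms unfolding sgraph_def by auto
    then obtain a b where "e = {a,b}" by (meson card_2_iff)
    then show "\<exists>u\<in>{u. {v,u} \<in> E}. e = {v,u}"
    proof (cases "v = a")
      case True then show ?thesis using e \<open>e = {a,b}\<close> by auto
    next
      case False then have "v = b" using e \<open>e = {a,b}\<close> by auto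
      then have "e = {v,a}" using \<open>e = {a,b}\<close> by auto
      then show ?thesis using e by auto
    qed
  qed
  then show ?thesis unfolding degree_def by (metis bij_betw_same_card)
qed

lemma nbrs_finite:
  assumes "sgraph V E" shows "finite {u. {v,u} \<in> E}"
proof -
  have "{u. {v,u} \<in> E} \<subseteq> V" using assms unfolding sgraph_def by auto
  then show ?thesis using assms unfolding sgraph_def by (meson finite_subset)
qed

lemma degenerate_subgraph:
  "subgraph V' E' V E \<Longrightarrow> degenerate d V E \<Longrightarrow> degenerate d V' E'"
  unfolding degenerate_def subgraph_def by blast

lemma degenerate_empty: "degenerate d V {}"
  unfolding degenerate_def subgraph_def degree_def by auto

lemma pull:
  assumes inj: "inj_on \<phi> A" and dg: "degenerate d A EA" and sA: "sgraph A EA"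
    and sub: "V' \<subseteq> \<phi> ` A" and ne: "V' \<noteq> {}" and s': "sgraph V' E'"
    and ed: "\<forall>e'\<in>E'. \<exists>e\<in>EA. e' = \<phi> ` e"
  shows "\<exists>v\<in>V'. degree E' v \<le> d"
proof -
  define V'' where "V'' = {x\<in>A. \<phi> x \<in> V'}"
  define E'' where "E'' = {e\<in>EA. \<phi> ` e \<in> E'}"
  have fA: "finite A" using sA unfolding sgraph_def by auto
  have "subgraph V'' E'' A EA"
    unfolding subgraph_def sgraph_def
  proof (intro conjI ballI)
    show "finite V''" using fA unfolding V''_def by auto
    fix e assume e: "e \<in> E''"
    then have "e \<subseteq> A" "card e = 2" using sA unfolding E''_def sgraph_def by auto
    moreover have "\<phi> ` e \<subseteq> V'" using e s' unfolding E''_def sgraph_def by auto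
    ultimately show "e \<subseteq> V''" "card e = 2" unfolding V''_def by auto
  qed (auto simp: V''_def E''_def)
  moreover have "V'' \<noteq> {}" using sub ne unfolding V''_def by auto
  ultimately obtain x where x: "x \<in> V''" "degree E'' x \<le> d"
    using dg unfolding degenerate_def by blast
  have "{e'\<in>E'. \<phi> x \<in> e'} \<subseteq> image \<phi> ` {e\<in>E''. x \<in> e}"
  proof
    fix e' assume e': "e' \<in> {e'\<in>E'. \<phi> x \<in> e'}"
    then obtain e where e: "e \<in> EA" "e' = \<phi> ` e" using ed by auto
    have "e \<subseteq> A" using e sA unfolding sgraph_def by auto
    moreover have "x \<in> A" using x unfolding V''_def by auto
    ultimately have "x \<in> e" using e e' inj by (auto dest: inj_onD)
    then show "e' \<in> image \<phi> ` {e\<in>E''. x \<in> e}" using e e' unfolding E''_def by auto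
  qed
  moreover have "finite {e\<in>E''. x \<in> e}"
  proof -
    have "E'' \<subseteq> Pow A" using sA unfolding E''_def sgraph_def by auto
    then have "finite E''" using fA by (meson finite_Pow_iff finite_subset)
    then show ?thesis by auto
  qed
  ultimately have "degree E' (\<phi> x) \<le> card {e\<in>E''. x \<in> e}"
    unfolding degree_def by (meson card_image_le card_mono finite_imageI order_trans)
  then show ?thesis using x unfolding degree_def V''_def by force
qed

definition fwd :: "'a set set \<Rightarrow> ('a \<Rightarrow> nat) \<Rightarrow> 'a \<Rightarrow> 'a set" where
  "fwd E r v = {u. {v,u} \<in> E \<and> r v < r u}"

lemma degen_order:
  assumes "sgraph V E" "degenerate d V E"
  shows "\<exists>r. inj_on r V \<and> (\<forall>v\<in>V. card (fwd E r v) \<le> d)"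
  using assms
proof (induction "card V" arbitrary: V E rule: less_induct)
  case less
  show ?case
  proof (cases "V = {}")
    case True then show ?thesis by auto
  next
    case False
    have "subgraph V E V E" using less.prems unfolding subgraph_def by auto
    then obtain v where v: "v \<in> V" "degree E v \<le> d"
      using less.prems False unfolding degenerate_def by blast
    define V0 where "V0 = V - {v}"
    define E0 where "E0 = {e\<in>E. v \<notin> e}"
    have sub0: "subgraph V0 E0 V E" using less.prems(1) unfolding subgraph_def sgraph_def V0_def E0_def
      by auto
    then have s0: "sgraph V0 E0" unfolding subgraph_def by auto
    have d0: "degenerate d V0 E0" using sub0 less.prems(2) degenerate_subgraph by blast
    have fV: "finite V" using less.prems(1) unfolding sgraph_def by auto
    have "card V0 < card V" unfolding V0_def using card_Diff1_less[OF fV v(1)] .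
    then obtain r0 where r0: "inj_on r0 V0" "\<forall>v\<in>V0. card (fwd E0 r0 v) \<le> d"
      using less.hyps s0 d0 by blast
    define r where "r = (\<lambda>u. if u = v then 0 else Suc (r0 u))"
    have "inj_on r V" using r0(1) unfolding r_def inj_on_def V0_def by auto
    moreover have "\<forall>u\<in>V. card (fwd E r u) \<le> d"
    proof
      fix u assume u: "u \<in> V"
      show "card (fwd E r u) \<le> d"
      proof (cases "u = v")
        case True
        have "fwd E r u \<subseteq> {w. {v,w} \<in> E}" unfolding fwd_def using True by auto
        then have "card (fwd E r u) \<le> card {w. {v,w} \<in> E}"
          using nbrs_finite[OF less.prems(1)] card_mono by blast
        then show ?thesis using v degree_nbrs[OF less.prems(1)] by simp
      next
        case False
        have "fwd E r u \<subseteq> fwd E0 r0 u"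
          unfolding fwd_def E0_def r_def using False by (auto split: if_splits)
        moreover have "finite (fwd E0 r0 u)"
          using nbrs_finite[OF s0, of u] unfolding fwd_def by (auto intro: finite_subset)
        ultimately have "card (fwd E r u) \<le> card (fwd E0 r0 u)" by (simp add: card_mono)
        moreover have "u \<in> V0" unfolding V0_def using u False by auto
        ultimately show ?thesis using r0(2) by (meson order_trans)
      qed
    qed
    ultimately show ?thesis by blast
  qed
qed

fun walk :: "'a::linorder set set \<Rightarrow> ('a \<Rightarrow> nat) \<Rightarrow> 'a \<Rightarrow> nat list \<Rightarrow> 'a" where
  "walk E r v [] = v"
| "walk E r v (i#is) = walk E r (sorted_list_of_set (fwd E r v) ! i) is"

lemma walk_append: "walk E r v (is @ js) = walk E r (walk E r v is) js"
  by (induction "is" arbitrary: v) auto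

lemma walk_step:
  assumes "finite (fwd E r (walk E r v is))" "u \<in> fwd E r (walk E r v is)"
  shows "\<exists>i < card (fwd E r (walk E r v is)). walk E r v (is @ [i]) = u"
proof -
  let ?F = "fwd E r (walk E r v is)"
  obtain i where "i < length (sorted_list_of_set ?F)" "sorted_list_of_set ?F ! i = u"
    using assms by (metis in_set_conv_nth set_sorted_list_of_set)
  then show ?thesis using assms by (auto simp: walk_append)
qed

lemma iso_edges:
  assumes sH: "sgraph VH EH" and s': "sgraph V' E'" and b: "bij_betw g VH V'"
    and iso: "\<forall>x\<in>VH. \<forall>y\<in>VH. {x,y} \<in> EH \<longleftrightarrow> {g x, g y} \<in> E'"
  shows "E' = image g ` EH"
proof
  show "E' \<subseteq> image g ` EH"
  proof
    fix e assume e: "e \<in> E'"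
    then have "e \<subseteq> V'" "card e = 2" using s' unfolding sgraph_def by auto
    then obtain a b where ab: "e = {a,b}" "a \<in> V'" "b \<in> V'" by (metis card_2_iff insert_subset)
    then obtain x y where "x \<in> VH" "y \<in> VH" "a = g x" "b = g y" using b
      by (metis bij_betw_imp_surj_on imageE)
    then have "{x,y} \<in> EH" using iso e ab by auto
    then have "g ` {x,y} \<in> image g ` EH" by blast
    then show "e \<in> image g ` EH" using ab \<open>a = g x\<close> \<open>b = g y\<close> by simp
  qed
next
  show "image g ` EH \<subseteq> E'"
  proof
    fix e assume "e \<in> image g ` EH"
    then obtain e0 where e0: "e0 \<in> EH" "e = g ` e0" by auto
    then have "e0 \<subseteq> VH" "card e0 = 2" using sH unfolding sgraph_def by auto
    then obtain x y where "e0 = {x,y}" "x \<in> VH" "y \<in> VH" by (metis card_2_iff insert_subset)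
    then show "e \<in> E'" using iso e0 by auto
  qed
qed

definition lstD :: "nat \<Rightarrow> nat \<Rightarrow> nat list set" where
  "lstD d k = {is. set is \<subseteq> {..<d} \<and> length is \<le> k}"

lemma finite_lstD: "finite (lstD d k)"
  unfolding lstD_def by (rule finite_lists_length_le) simp

lemma copy_code:
  fixes E :: "'a::linorder set set"
  assumes sH: "sgraph VH EH" and sG: "sgraph V E" and r: "inj_on r V" "\<forall>v\<in>V. card (fwd E r v) \<le> d"
    and c: "subgraph V' E' V E" "graph_iso VH EH V' E'"
  shows "\<exists>T g. T \<subseteq> VH \<and> card T \<le> alpha_d d VH EH \<and> V' = g ` VH \<and> E' = image g ` EH \<and>
     (\<forall>w\<in>VH. \<exists>t\<in>T. \<exists>is\<in>lstD d (card VH). walk E r (g t) is = g w)"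
proof -
  obtain g where b: "bij_betw g VH V'" and iso: "\<forall>x\<in>VH. \<forall>y\<in>VH. {x,y} \<in> EH \<longleftrightarrow> {g x, g y} \<in> E'"
    using c(2) unfolding graph_iso_def by blast
  have s': "sgraph V' E'" and VV: "V' \<subseteq> V" and EE: "E' \<subseteq> E" using c(1) unfolding subgraph_def by auto
  have gV: "g ` VH = V'" using b by (simp add: bij_betw_def)
  have fVH: "finite VH" using sH unfolding sgraph_def by auto
  have Eimg: "E' = image g ` EH" using iso_edges[OF sH s' b iso] .
  define \<rho> where "\<rho> = (\<lambda>w. r (g w))"
  have injg: "inj_on g VH" using b by (simp add: bij_betw_def)
  have injrho: "inj_on \<rho> VH"
  proof (rule inj_onI)
    fix x y assume xy: "x \<in> VH" "y \<in> VH" "\<rho> x = \<rho> y"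
    then have "g x \<in> V" "g y \<in> V" using gV VV by auto
    then have "g x = g y" using xy(3) r(1) unfolding \<rho>_def by (auto dest: inj_onD)
    then show "x = y" using injg xy by (auto dest: inj_onD)
  qed
  define T where "T = {w\<in>VH. \<forall>x\<in>VH. {x,w} \<in> EH \<longrightarrow> \<not> \<rho> x < \<rho> w}"
  have ffwd: "finite (fwd E r v)" for v
    using nbrs_finite[OF sG, of v] unfolding fwd_def by (auto intro: finite_subset)
  have edge_fwd: "g w \<in> fwd E r (g x)" if "x \<in> VH" "w \<in> VH" "{x,w} \<in> EH" "\<rho> x < \<rho> w" for x w
    using that iso EE unfolding fwd_def \<rho>_def by auto
  have reach: "\<forall>w\<in>VH. \<rho> w = N \<longrightarrow> (\<exists>t\<in>T. \<exists>is. set is \<subseteq> {..<d} \<and>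
      length is \<le> card {y\<in>VH. \<rho> y < \<rho> w} \<and> walk E r (g t) is = g w)" for N
  proof (induction N rule: less_induct)
    case (less N)
    show ?case
    proof (intro ballI impI)
      fix w assume w: "w \<in> VH" "\<rho> w = N"
      show "\<exists>t\<in>T. \<exists>is. set is \<subseteq> {..<d} \<and> length is \<le> card {y\<in>VH. \<rho> y < \<rho> w} \<and> walk E r (g t) is = g w"
      proof (cases "w \<in> T")
        case True then show ?thesis by (intro bexI[of _ w] exI[of _ "[]"]) auto
      next
        case False
        then obtain x where x: "x \<in> VH" "{x,w} \<in> EH" "\<rho> x < \<rho> w" using w unfolding T_def by auto
        then obtain t "is" where ti: "t \<in> T" "set is \<subseteq> {..<d}" "length is \<le> card {y\<in>VH. \<rho> y < \<rho> x}"
          "walk E r (g t) is = g x" using less.IH w by blast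
        have "g w \<in> fwd E r (walk E r (g t) is)" using edge_fwd[OF x(1) w(1) x(2,3)] ti(4) by simp
        then obtain i where i: "i < card (fwd E r (g x))" "walk E r (g t) (is @ [i]) = g w"
          using walk_step[OF ffwd] ti(4) by metis
        have "g x \<in> V" using x gV VV by auto
        then have "i < d" using i r(2) by (meson order_less_le_trans)
        have "insert x {y\<in>VH. \<rho> y < \<rho> x} \<subseteq> {y\<in>VH. \<rho> y < \<rho> w}" using x by auto
        then have "card (insert x {y\<in>VH. \<rho> y < \<rho> x}) \<le> card {y\<in>VH. \<rho> y < \<rho> w}"
          using fVH by (intro card_mono) auto
        then have "length (is @ [i]) \<le> card {y\<in>VH. \<rho> y < \<rho> w}" using ti(3) fVH by simp
        then show ?thesis using ti i \<open>i < d\<close> by (intro bexI[of _ t] exI[of _ "is @ [i]"]) auto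
      qed
    qed
  qed
  have reach2: "\<forall>w\<in>VH. \<exists>t\<in>T. \<exists>is\<in>lstD d (card VH). walk E r (g t) is = g w"
  proof
    fix w assume w: "w \<in> VH"
    then obtain t "is" where ti: "t \<in> T" "set is \<subseteq> {..<d}" "length is \<le> card {y\<in>VH. \<rho> y < \<rho> w}"
          "walk E r (g t) is = g w" using reach by blast
    have "card {y\<in>VH. \<rho> y < \<rho> w} \<le> card VH" using fVH by (intro card_mono) auto
    then show "\<exists>t\<in>T. \<exists>is\<in>lstD d (card VH). walk E r (g t) is = g w" using ti unfolding lstD_def by force
  qed
  have Tindep: "\<forall>x\<in>T. \<forall>y\<in>T. {x,y} \<notin> EH"
  proof (intro ballI notI)
    fix x y assume xy: "x \<in> T" "y \<in> T" "{x,y} \<in> EH"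
    then have "{y,x} \<in> EH" by (simp add: insert_commute)
    then have "\<rho> x = \<rho> y" using xy unfolding T_def by force
    then have "x = y" using injrho xy unfolding T_def by (auto dest: inj_onD)
    then show False using xy sH unfolding sgraph_def by fastforce
  qed
  have Tdeg: "\<forall>x\<in>T. degree EH x \<le> d"
  proof
    fix t assume t: "t \<in> T"
    have "{u. {t, u} \<in> EH} \<subseteq> VH" using sH unfolding sgraph_def by auto
    then have "inj_on g {u. {t, u} \<in> EH}" using injg by (rule inj_on_subset[rotated])
    moreover have "g ` {u. {t,u} \<in> EH} \<subseteq> fwd E r (g t)"
    proof
      fix z assume "z \<in> g ` {u. {t,u} \<in> EH}"
      then obtain u where u: "{t,u} \<in> EH" "z = g u" by auto
      then have uV: "u \<in> VH" "t \<in> VH" using sH unfolding sgraph_def by auto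
      have "{u,t} \<in> EH" using u by (simp add: insert_commute)
      then have "\<not> \<rho> u < \<rho> t" using t uV unfolding T_def by auto
      moreover have "u \<noteq> t" using u sH unfolding sgraph_def by fastforce
      then have "\<rho> u \<noteq> \<rho> t" using injrho uV by (auto dest: inj_onD)
      ultimately have "\<rho> t < \<rho> u" by simp
      then show "z \<in> fwd E r (g t)" using edge_fwd[OF uV(2,1) u(1)] u by simp
    qed
    ultimately have "card {u. {t,u} \<in> EH} \<le> card (fwd E r (g t))"
      using ffwd by (meson card_inj_on_le)
    moreover have "g t \<in> V" using t gV VV unfolding T_def by auto
    ultimately show "degree EH t \<le> d" using degree_nbrs[OF sH] r(2) by (metis order_trans)
  qed
  have "card T \<le> alpha_d d VH EH"
    unfolding alpha_d_def
  proof (rule Max_ge)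
    have "{card S |S. S \<subseteq> VH \<and> (\<forall>x\<in>S. \<forall>y\<in>S. {x, y} \<notin> EH) \<and> (\<forall>x\<in>S. degree EH x \<le> d)}
       \<subseteq> card ` Pow VH" by auto
    then show "finite {card S |S. S \<subseteq> VH \<and> (\<forall>x\<in>S. \<forall>y\<in>S. {x, y} \<notin> EH) \<and> (\<forall>x\<in>S. degree EH x \<le> d)}"
      using fVH by (meson finite_Pow_iff finite_imageI finite_subset)
    show "card T \<in> {card S |S. S \<subseteq> VH \<and> (\<forall>x\<in>S. \<forall>y\<in>S. {x, y} \<notin> EH) \<and> (\<forall>x\<in>S. degree EH x \<le> d)}"
      using Tindep Tdeg unfolding T_def by blast
  qed
  moreover have "T \<subseteq> VH" unfolding T_def by auto
  ultimately show ?thesis using reach2 gV Eimg by blast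
qed

lemma transfer_sgraph:
  assumes inj: "inj_on \<phi> B" and sB: "sgraph B EB" and sub: "\<phi> ` B \<subseteq> V" and fV: "finite V"
  shows "sgraph V (image \<phi> ` EB)"
  unfolding sgraph_def
proof (intro conjI ballI)
  fix e assume "e \<in> image \<phi> ` EB"
  then obtain e0 where e0: "e0 \<in> EB" "e = \<phi> ` e0" by auto
  then have "e0 \<subseteq> B" "card e0 = 2" using sB unfolding sgraph_def by auto
  then show "e \<subseteq> V" "card e = 2" using e0 sub inj by (auto simp: card_image inj_on_subset)
qed (rule fV)

lemma transfer_degen:
  assumes inj: "inj_on \<phi> B" and sB: "sgraph B EB" and sub: "\<phi> ` B \<subseteq> V" and fV: "finite V"
    and dg: "degenerate d B EB"
  shows "degenerate d V (image \<phi> ` EB)"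
  unfolding degenerate_def
proof (intro allI impI, elim conjE)
  fix V' E' assume s: "subgraph V' E' V (image \<phi> ` EB)" and ne: "V' \<noteq> {}"
  have s': "sgraph V' E'" and EE: "E' \<subseteq> image \<phi> ` EB" using s unfolding subgraph_def by auto
  show "\<exists>v\<in>V'. degree E' v \<le> d"
  proof (cases "V' \<subseteq> \<phi> ` B")
    case True
    show ?thesis by (rule pull[OF inj dg sB True ne s']) (use EE in blast)
  next
    case False
    then obtain v where v: "v \<in> V'" "v \<notin> \<phi> ` B" by auto
    have emp: "{e\<in>E'. v \<in> e} = {}"
    proof -
      { fix e assume "e \<in> E'" "v \<in> e"
        then obtain e0 where "e0 \<in> EB" "e = \<phi> ` e0" using EE by auto
        then have "e \<subseteq> \<phi> ` B" using sB unfolding sgraph_def by auto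
        then have False using v \<open>v \<in> e\<close> by auto }
      then show ?thesis by auto
    qed
    have "degree E' v = 0" unfolding degree_def emp by simp
    then show ?thesis using v by (intro bexI[of _ v]) simp_all
  qed
qed

lemma finite_copies:
  assumes "finite V" "finite E"
  shows "finite {(V', E'). subgraph V' E' V E \<and> graph_iso VH EH V' E'}"
proof -
  have "{(V', E'). subgraph V' E' V E \<and> graph_iso VH EH V' E'} \<subseteq> Pow V \<times> Pow E"
    unfolding subgraph_def by auto
  then show ?thesis using assms by (meson finite_Pow_iff finite_SigmaI finite_subset)
qed

lemma transfer_copies:
  assumes inj: "inj_on \<phi> B" and sB: "sgraph B EB" and sub: "\<phi> ` B \<subseteq> V" and fV: "finite V"
  shows "num_copies VH EH B EB \<le> num_copies VH EH V (image \<phi> ` EB)"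
proof -
  let ?CB = "{(V', E'). subgraph V' E' B EB \<and> graph_iso VH EH V' E'}"
  let ?CG = "{(V', E'). subgraph V' E' V (image \<phi> ` EB) \<and> graph_iso VH EH V' E'}"
  define F where "F = (\<lambda>(V'::'a set, E'::'a set set). (\<phi> ` V', image \<phi> ` E'))"
  have fB: "finite B" and EBP: "EB \<subseteq> Pow B" using sB unfolding sgraph_def by auto
  then have fEB: "finite EB" by (meson finite_Pow_iff finite_subset)
  have injP: "inj_on (image \<phi>) (Pow B)" using inj by (rule inj_on_image_Pow)
  have injPP: "inj_on (image (image \<phi>)) (Pow (Pow B))" using injP by (rule inj_on_image_Pow)
  have "inj_on F ?CB"
  proof (rule inj_onI)
    fix a b assume a: "a \<in> ?CB" and b: "b \<in> ?CB" and eq: "F a = F b"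
    obtain Va Ea where av: "a = (Va, Ea)" by (cases a) simp
    obtain Vb Eb where bv: "b = (Vb, Eb)" by (cases b) simp
    have "subgraph Va Ea B EB" "subgraph Vb Eb B EB" using a b av bv by auto
    then have "Va \<subseteq> B" "Ea \<subseteq> Pow B" "Vb \<subseteq> B" "Eb \<subseteq> Pow B"
      using EBP unfolding subgraph_def by blast+
    moreover have "\<phi> ` Va = \<phi> ` Vb" "image \<phi> ` Ea = image \<phi> ` Eb" using eq av bv F_def by auto
    ultimately have "Va = Vb" "Ea = Eb"
      using inj_onD[OF injP, of Va Vb] inj_onD[OF injPP, of Ea Eb] by auto
    then show "a = b" using av bv by simp
  qed
  moreover have "F ` ?CB \<subseteq> ?CG"
  proof
    fix z assume "z \<in> F ` ?CB"
    then obtain V' E' where z: "z = (\<phi> ` V', image \<phi> ` E')" and c: "subgraph V' E' B EB" "graph_iso VH EH V' E'"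
      unfolding F_def by auto
    have VB: "V' \<subseteq> B" and EE: "E' \<subseteq> EB" and s': "sgraph V' E'" using c unfolding subgraph_def by auto
    have injV: "inj_on \<phi> V'" using inj VB by (rule inj_on_subset)
    have fV': "finite (\<phi> ` V')" using s' unfolding sgraph_def by auto
    have "sgraph (\<phi> ` V') (image \<phi> ` E')" by (rule transfer_sgraph[OF injV s' subset_refl fV'])
    moreover have "\<phi> ` V' \<subseteq> V" using sub VB by blast
    moreover have "image \<phi> ` E' \<subseteq> image \<phi> ` EB" using EE by blast
    ultimately have "subgraph (\<phi> ` V') (image \<phi> ` E') V (image \<phi> ` EB)"
      unfolding subgraph_def by blast
    moreover have "graph_iso VH EH (\<phi> ` V') (image \<phi> ` E')"
    proof -
      obtain f where f: "bij_betw f VH V'" "\<forall>x\<in>VH. \<forall>y\<in>VH. {x,y} \<in> EH \<longleftrightarrow> {f x, f y} \<in> E'"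
        using c(2) unfolding graph_iso_def by blast
      have "bij_betw (\<phi> \<circ> f) VH (\<phi> ` V')"
        using bij_betw_trans[OF f(1) inj_on_imp_bij_betw[OF injV]] .
      moreover have "\<forall>x\<in>VH. \<forall>y\<in>VH. {x,y} \<in> EH \<longleftrightarrow> {(\<phi> \<circ> f) x, (\<phi> \<circ> f) y} \<in> image \<phi> ` E'"
      proof (intro ballI)
        fix x y assume xy: "x \<in> VH" "y \<in> VH"
        then have fxy: "f x \<in> V'" "f y \<in> V'" using f(1) by (auto simp: bij_betw_def)
        have "{f x, f y} \<in> E' \<longleftrightarrow> \<phi> ` {f x, f y} \<in> image \<phi> ` E'"
        proof
          assume "\<phi> ` {f x, f y} \<in> image \<phi> ` E'"
          then obtain e where e: "e \<in> E'" "\<phi> ` e = \<phi> ` {f x, f y}" by auto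
          have "e \<in> Pow B" "{f x, f y} \<in> Pow B" using e EE EBP fxy VB by auto
          then have "e = {f x, f y}" using inj_onD[OF injP e(2)] by blast
          then show "{f x, f y} \<in> E'" using e by simp
        qed (rule imageI)
        then show "{x,y} \<in> EH \<longleftrightarrow> {(\<phi> \<circ> f) x, (\<phi> \<circ> f) y} \<in> image \<phi> ` E'" using f(2) xy by simp
      qed
      ultimately show ?thesis unfolding graph_iso_def by blast
    qed
    ultimately show "z \<in> ?CG" using z by auto
  qed
  moreover have "finite ?CG"
    using finite_copies[OF fV, of "image \<phi> ` EB"] fEB by auto
  ultimately have "card ?CB \<le> card ?CG" by (rule card_inj_on_le)
  then show ?thesis unfolding num_copies_def .
qed

lemma img_iso:
  assumes inj: "inj_on g VH" and sH: "sgraph VH EH"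
  shows "graph_iso VH EH (g ` VH) (image g ` EH)"
  unfolding graph_iso_def
proof (intro exI conjI ballI)
  show "bij_betw g VH (g ` VH)" using inj by (simp add: bij_betw_def)
  have injP: "inj_on (image g) (Pow VH)" using inj by (rule inj_on_image_Pow)
  fix x y assume xy: "x \<in> VH" "y \<in> VH"
  show "{x,y} \<in> EH \<longleftrightarrow> {g x, g y} \<in> image g ` EH"
  proof
    assume "{g x, g y} \<in> image g ` EH"
    then obtain e where e: "e \<in> EH" "g ` e = g ` {x,y}" by auto
    have "e \<in> Pow VH" "{x,y} \<in> Pow VH" using e sH xy unfolding sgraph_def by auto
    then have "e = {x,y}" using inj_onD[OF injP e(2)] by blast
    then show "{x,y} \<in> EH" using e by simp
  next
    assume "{x,y} \<in> EH"
    then have "g ` {x,y} \<in> image g ` EH" by blast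
    then show "{g x, g y} \<in> image g ` EH" by simp
  qed
qed


definition blowB :: "'b set \<Rightarrow> 'b set \<Rightarrow> nat \<Rightarrow> ('b \<times> nat) set" where
  "blowB VH S m = {p. fst p \<in> VH \<and> (if fst p \<in> S then snd p < m else snd p = 0)}"

definition blowE :: "'b set \<Rightarrow> 'b set set \<Rightarrow> 'b set \<Rightarrow> nat \<Rightarrow> ('b \<times> nat) set set" where
  "blowE VH EH S m = {{p,q} | p q. p \<in> blowB VH S m \<and> q \<in> blowB VH S m \<and> {fst p, fst q} \<in> EH}"

lemma blowB_sub: "m \<ge> 1 \<Longrightarrow> blowB VH S m \<subseteq> VH \<times> {..<m}"
  unfolding blowB_def by (auto split: if_splits)

lemma blow_sgraph:
  assumes sH: "sgraph VH EH"
  shows "sgraph (blowB VH S m) (blowE VH EH S m)"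
  unfolding sgraph_def
proof (intro conjI ballI)
  have "finite VH" using sH unfolding sgraph_def by auto
  have "blowB VH S m \<subseteq> VH \<times> {..<Suc m}" unfolding blowB_def by (auto split: if_splits)
  then show "finite (blowB VH S m)" using \<open>finite VH\<close> by (meson finite_SigmaI finite_lessThan finite_subset)
  fix e assume "e \<in> blowE VH EH S m"
  then obtain p q where pq: "e = {p,q}" "p \<in> blowB VH S m" "q \<in> blowB VH S m" "{fst p, fst q} \<in> EH"
    unfolding blowE_def by auto
  then have "card {fst p, fst q} = 2" using sH unfolding sgraph_def by auto
  then have "fst p \<noteq> fst q" by (metis card_2_iff doubleton_eq_iff)
  then have "p \<noteq> q" by auto
  then show "e \<subseteq> blowB VH S m" "card e = 2" using pq by auto
qed

lemma blow_degen:
  assumes sH: "sgraph VH EH" and dH: "degenerate d VH EH" and SV: "S \<subseteq> VH"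
    and ind: "\<forall>x\<in>S. \<forall>y\<in>S. {x,y} \<notin> EH" and deg: "\<forall>x\<in>S. degree EH x \<le> d"
  shows "degenerate d (blowB VH S m) (blowE VH EH S m)"
  unfolding degenerate_def
proof (intro allI impI, elim conjE)
  let ?B = "blowB VH S m" and ?E = "blowE VH EH S m"
  have sB: "sgraph ?B ?E" by (rule blow_sgraph[OF sH])
  fix V' E' assume s: "subgraph V' E' ?B ?E" and ne: "V' \<noteq> {}"
  have s': "sgraph V' E'" and EE: "E' \<subseteq> ?E" and VB: "V' \<subseteq> ?B" using s unfolding subgraph_def by auto
  show "\<exists>v\<in>V'. degree E' v \<le> d"
  proof (cases "\<exists>p\<in>V'. fst p \<in> S")
    case True
    then obtain p where p: "p \<in> V'" "fst p \<in> S" by auto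
    have "{q. {p,q} \<in> ?E} \<subseteq> (\<lambda>y. (y,0::nat)) ` {y. {fst p, y} \<in> EH}"
    proof
      fix q assume "q \<in> {q. {p,q} \<in> ?E}"
      then obtain p' q' where pq: "{p,q} = {p',q'}" "p' \<in> ?B" "q' \<in> ?B" "{fst p', fst q'} \<in> EH"
        unfolding blowE_def by auto
      have "fst ` {p,q} = fst ` {p',q'}" using pq(1) by simp
      then have fe: "{fst p, fst q} \<in> EH" using pq(4) by simp
      then have "fst q \<notin> S" using ind p(2) by auto
      moreover have "q \<in> {p',q'}" using pq(1) by blast
      then have "q \<in> ?B" using pq(2,3) by auto
      ultimately have "q = (fst q, 0)" unfolding blowB_def by (cases q) auto
      then show "q \<in> (\<lambda>y. (y,0::nat)) ` {y. {fst p, y} \<in> EH}" using fe by (metis image_eqI mem_Collect_eq)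
    qed
    then have "card {q. {p,q} \<in> ?E} \<le> card ((\<lambda>y. (y,0::nat)) ` {y. {fst p, y} \<in> EH})"
      by (intro card_mono[OF finite_imageI[OF nbrs_finite[OF sH]]])
    also have "\<dots> \<le> card {y. {fst p, y} \<in> EH}" by (rule card_image_le) (rule nbrs_finite[OF sH])
    also have "\<dots> \<le> d" using deg p(2) degree_nbrs[OF sH] by metis
    finally have "degree ?E p \<le> d" using degree_nbrs[OF sB] by simp
    moreover have "degree E' p \<le> degree ?E p"
    proof -
      have "finite ?E" using sB unfolding sgraph_def
        by (meson finite_Pow_iff finite_subset subsetI PowI)
      then show ?thesis unfolding degree_def using EE by (intro card_mono) auto
    qed
    ultimately have "degree E' p \<le> d" by (meson order_trans)
    then show ?thesis using p(1) by (intro bexI[of _ p])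
  next
    case False
    have inj: "inj_on (\<lambda>y. (y, 0::nat)) VH" by (auto intro: inj_onI)
    have sub: "V' \<subseteq> (\<lambda>y. (y, 0::nat)) ` VH"
    proof
      fix p assume "p \<in> V'"
      then have "p \<in> ?B" "fst p \<notin> S" using VB False by auto
      then show "p \<in> (\<lambda>y. (y, 0::nat)) ` VH" unfolding blowB_def by (cases p) auto
    qed
    show ?thesis
    proof (rule pull[OF inj dH sH sub ne s'], intro ballI)
      fix e' assume e': "e' \<in> E'"
      then obtain p q where pq: "e' = {p,q}" "{fst p, fst q} \<in> EH" using EE unfolding blowE_def by auto
      have "e' \<subseteq> V'" using e' s' unfolding sgraph_def by auto
      then have "p = (fst p, 0)" "q = (fst q, 0)" using sub pq(1) by auto
      then have "e' = (\<lambda>y. (y, 0::nat)) ` {fst p, fst q}" using pq(1) by auto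
      then show "\<exists>e\<in>EH. e' = (\<lambda>y. (y, 0::nat)) ` e" using pq(2) by blast
    qed
  qed
qed

lemma blow_copies:
  assumes sH: "sgraph VH EH" and SV: "S \<subseteq> VH" and ind: "\<forall>x\<in>S. \<forall>y\<in>S. {x,y} \<notin> EH"
  shows "m ^ card S \<le> num_copies VH EH (blowB VH S m) (blowE VH EH S m)"
proof -
  let ?B = "blowB VH S m" and ?E = "blowE VH EH S m"
  let ?C = "{(V', E'). subgraph V' E' ?B ?E \<and> graph_iso VH EH V' E'}"
  have sB: "sgraph ?B ?E" by (rule blow_sgraph[OF sH])
  have fS: "finite S" using sH SV unfolding sgraph_def by (auto intro: finite_subset)
  define G where "G = (\<lambda>\<sigma> w. (w, if w \<in> S then \<sigma> w else (0::nat)))"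
  define F where "F = (\<lambda>\<sigma>. (G \<sigma> ` VH, image (G \<sigma>) ` EH))"
  have "inj_on F (S \<rightarrow>\<^sub>E {..<m})"
  proof (rule inj_onI)
    fix \<sigma> \<tau> assume s: "\<sigma> \<in> S \<rightarrow>\<^sub>E {..<m}" "\<tau> \<in> S \<rightarrow>\<^sub>E {..<m}" "F \<sigma> = F \<tau>"
    then have eq: "G \<sigma> ` VH = G \<tau> ` VH" unfolding F_def by simp
    show "\<sigma> = \<tau>"
    proof (rule extensionalityI[of _ S])
      show "\<sigma> \<in> extensional S" "\<tau> \<in> extensional S" using s by (auto simp: PiE_def)
      fix x assume x: "x \<in> S"
      then have "G \<sigma> x \<in> G \<tau> ` VH" using eq SV by (metis imageI subsetD)
      then show "\<sigma> x = \<tau> x" using x unfolding G_def by auto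
    qed
  qed
  moreover have "F ` (S \<rightarrow>\<^sub>E {..<m}) \<subseteq> ?C"
  proof
    fix z assume "z \<in> F ` (S \<rightarrow>\<^sub>E {..<m})"
    then obtain \<sigma> where \<sigma>: "\<sigma> \<in> S \<rightarrow>\<^sub>E {..<m}" "z = F \<sigma>" by auto
    let ?g = "G \<sigma>"
    have injg: "inj_on ?g VH" unfolding G_def by (auto intro: inj_onI)
    have gB: "?g ` VH \<subseteq> ?B" using \<sigma>(1) unfolding G_def blowB_def by auto
    have fVH: "finite VH" using sH unfolding sgraph_def by auto
    have "sgraph (?g ` VH) (image ?g ` EH)"
      by (rule transfer_sgraph[OF injg sH subset_refl]) (use fVH in auto)
    moreover have "image ?g ` EH \<subseteq> ?E"
    proof
      fix e assume "e \<in> image ?g ` EH"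
      then obtain e0 where e0: "e0 \<in> EH" "e = ?g ` e0" by auto
      then have "e0 \<subseteq> VH" "card e0 = 2" using sH unfolding sgraph_def by auto
      then obtain x y where xy: "e0 = {x,y}" "x \<in> VH" "y \<in> VH" by (metis card_2_iff insert_subset)
      have "?g x \<in> ?B" "?g y \<in> ?B" using gB xy by auto
      moreover have "{fst (?g x), fst (?g y)} \<in> EH" using e0 xy unfolding G_def by simp
      ultimately have "{?g x, ?g y} \<in> ?E" unfolding blowE_def
        by (intro CollectI exI[of _ "?g x"] exI[of _ "?g y"]) simp
      then show "e \<in> ?E" using e0 xy by simp
    qed
    ultimately have "subgraph (?g ` VH) (image ?g ` EH) ?B ?E" using gB unfolding subgraph_def by auto
    moreover have "graph_iso VH EH (?g ` VH) (image ?g ` EH)" by (rule img_iso[OF injg sH])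
    ultimately show "z \<in> ?C" using \<sigma>(2) unfolding F_def by auto
  qed
  moreover have "finite ?C"
  proof (rule finite_copies)
    show "finite ?B" "finite ?E" using sB unfolding sgraph_def by (auto intro: finite_subset[of _ "Pow ?B"])
  qed
  ultimately have "card (S \<rightarrow>\<^sub>E {..<m}) \<le> card ?C" by (meson card_inj_on_le)
  then show ?thesis unfolding num_copies_def using card_funcsetE[OF fS, of "{..<m}"] by simp
qed

lemma upper:
  fixes E :: "nat set set"
  assumes sH: "sgraph VH EH" and sG: "sgraph {..<n} E" and dG: "degenerate d {..<n} E" and n: "n \<ge> 1"
  shows "num_copies VH EH {..<n} E \<le>
    2 ^ card VH * (card VH * card (lstD d (card VH))) ^ card VH * n ^ alpha_d d VH EH"
proof -
  obtain r where r: "inj_on r {..<n}" "\<forall>v\<in>{..<n}. card (fwd E r v) \<le> d"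
    using degen_order[OF sG dG] by blast
  define k where "k = card VH"
  define \<alpha> where "\<alpha> = alpha_d d VH EH"
  define L where "L = lstD d k"
  define P where "P = {T. T \<subseteq> VH \<and> card T \<le> \<alpha>}"
  define Cs where "Cs = Sigma P (\<lambda>T. (T \<rightarrow>\<^sub>E {..<n}) \<times> (VH \<rightarrow>\<^sub>E (VH \<times> L)))"
  define dec where "dec = (\<lambda>(T::'a set, h::'a \<Rightarrow> nat, \<delta>::'a \<Rightarrow> 'a \<times> nat list).
      ((\<lambda>w. walk E r (h (fst (\<delta> w))) (snd (\<delta> w))) ` VH,
       image (\<lambda>w. walk E r (h (fst (\<delta> w))) (snd (\<delta> w))) ` EH))"
  have fVH: "finite VH" using sH unfolding sgraph_def by auto
  let ?C = "{(V', E'). subgraph V' E' {..<n} E \<and> graph_iso VH EH V' E'}"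
  have "?C \<subseteq> dec ` Cs"
  proof
    fix z assume "z \<in> ?C"
    then obtain V' E' where z: "z = (V', E')" "subgraph V' E' {..<n} E" "graph_iso VH EH V' E'" by auto
    obtain T g where Tg: "T \<subseteq> VH" "card T \<le> alpha_d d VH EH" "V' = g ` VH" "E' = image g ` EH"
      "\<forall>w\<in>VH. \<exists>t\<in>T. \<exists>is\<in>lstD d (card VH). walk E r (g t) is = g w"
      using copy_code[OF sH sG r z(2,3)] by (elim exE conjE) blast
    have Tg5: "\<forall>w\<in>VH. \<exists>t\<in>T. \<exists>is\<in>L. walk E r (g t) is = g w" using Tg(5) unfolding L_def k_def .
    define Q where "Q = (\<lambda>w p. fst p \<in> T \<and> snd p \<in> L \<and> walk E r (g (fst p)) (snd p) = g w)"
    define \<delta> where "\<delta> = (\<lambda>w. SOME p. Q w p)"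
    have \<delta>: "fst (\<delta> w) \<in> T \<and> snd (\<delta> w) \<in> L \<and> walk E r (g (fst (\<delta> w))) (snd (\<delta> w)) = g w" if wV: "w \<in> VH" for w
    proof -
      obtain t "is" where "t \<in> T" "is \<in> L" "walk E r (g t) is = g w"
        using bspec[OF Tg5 wV] by blast
      then have "Q w (t, is)" unfolding Q_def by simp
      then have "Q w (\<delta> w)" unfolding \<delta>_def by (rule someI)
      then show ?thesis unfolding Q_def .
    qed
    define h where "h = restrict g T"
    define \<delta>' where "\<delta>' = restrict \<delta> VH"
    have "V' \<subseteq> {..<n}" using z(2) unfolding subgraph_def by auto
    then have hP: "h \<in> T \<rightarrow>\<^sub>E {..<n}" unfolding h_def restrict_PiE_iff using Tg(1,3) by blast
    have dP: "\<delta>' \<in> VH \<rightarrow>\<^sub>E (VH \<times> L)" unfolding \<delta>'_def restrict_PiE_iff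
    proof
      fix w assume w: "w \<in> VH"
      then have "fst (\<delta> w) \<in> VH" "snd (\<delta> w) \<in> L" using \<delta>[OF w] Tg(1) by blast+
      then show "\<delta> w \<in> VH \<times> L" by (simp add: mem_Times_iff)
    qed
    have TP: "T \<in> P" unfolding P_def \<alpha>_def using Tg(1,2) by blast
    have inC: "(T, h, \<delta>') \<in> Cs" unfolding Cs_def by (rule SigmaI[OF TP], rule SigmaI[OF hP dP])
    define g' where "g' = (\<lambda>w. walk E r (h (fst (\<delta>' w))) (snd (\<delta>' w)))"
    have gg: "g' w = g w" if "w \<in> VH" for w
      using \<delta>[OF that] that unfolding g'_def h_def \<delta>'_def by auto
    have "g' ` VH = g ` VH" using gg by (rule image_cong[OF refl])
    moreover have "image g' ` EH = image g ` EH"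
    proof (rule image_cong[OF refl])
      fix e assume "e \<in> EH"
      then have "e \<subseteq> VH" using sH unfolding sgraph_def by auto
      then show "g' ` e = g ` e" using gg by (intro image_cong) auto
    qed
    moreover have "dec (T, h, \<delta>') = (g' ` VH, image g' ` EH)" unfolding dec_def g'_def by simp
    ultimately have "dec (T, h, \<delta>') = z" using z(1) Tg(3,4) by simp
    then show "z \<in> dec ` Cs" using rev_image_eqI[OF inC] by metis
  qed
  moreover have fP: "finite P" unfolding P_def using fVH by auto
  have fL: "finite L" unfolding L_def by (rule finite_lstD)
  have fCs: "finite Cs" unfolding Cs_def using fP fVH fL
    by (intro finite_SigmaI finite_cartesian_product finite_PiE) (auto simp: P_def intro: finite_subset)
  ultimately have "card ?C \<le> card Cs" by (meson card_image_le card_mono finite_imageI order_trans)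
  also have "card Cs = (\<Sum>T\<in>P. card ((T \<rightarrow>\<^sub>E {..<n}) \<times> (VH \<rightarrow>\<^sub>E (VH \<times> L))))"
    unfolding Cs_def using fP by (intro card_SigmaI) (auto simp: P_def intro!: finite_cartesian_product finite_PiE fVH fL intro: finite_subset)
  also have "\<dots> \<le> (\<Sum>T\<in>P. n ^ \<alpha> * (k * card L) ^ k)"
  proof (rule sum_mono)
    fix T assume T: "T \<in> P"
    then have fT: "finite T" using fVH unfolding P_def by (auto intro: finite_subset)
    have "card ((T \<rightarrow>\<^sub>E {..<n}) \<times> (VH \<rightarrow>\<^sub>E (VH \<times> L))) = n ^ card T * (k * card L) ^ k"
      unfolding card_cartesian_product card_funcsetE[OF fT] card_funcsetE[OF fVH] k_def
      by simp
    also have "\<dots> \<le> n ^ \<alpha> * (k * card L) ^ k"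
      using T n unfolding P_def by (intro mult_right_mono power_increasing) auto
    finally show "card ((T \<rightarrow>\<^sub>E {..<n}) \<times> (VH \<rightarrow>\<^sub>E (VH \<times> L))) \<le> n ^ \<alpha> * (k * card L) ^ k" .
  qed
  also have "\<dots> = card P * (n ^ \<alpha> * (k * card L) ^ k)" by simp
  also have "\<dots> \<le> 2 ^ k * (n ^ \<alpha> * (k * card L) ^ k)"
  proof -
    have "card P \<le> card (Pow VH)" unfolding P_def using fVH by (intro card_mono) auto
    then show ?thesis using fVH unfolding k_def by (simp add: card_Pow)
  qed
  finally show ?thesis unfolding num_copies_def k_def \<alpha>_def L_def by (simp add: ac_simps)
qed

lemma ex_set_props:
  "finite {num_copies VH EH {..<n} E | E :: nat set set. sgraph {..<n} E \<and> degenerate d {..<n} E}"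
  "{num_copies VH EH {..<n} E | E :: nat set set. sgraph {..<n} E \<and> degenerate d {..<n} E} \<noteq> {}"
proof -
  have "{E :: nat set set. sgraph {..<n} E \<and> degenerate d {..<n} E} \<subseteq> Pow (Pow {..<n})"
    unfolding sgraph_def by auto
  then have "finite {E :: nat set set. sgraph {..<n} E \<and> degenerate d {..<n} E}"
    by (rule finite_subset) simp
  then show "finite {num_copies VH EH {..<n} E | E :: nat set set. sgraph {..<n} E \<and> degenerate d {..<n} E}"
    by (rule finite_image_set)
  have "sgraph {..<n} ({} :: nat set set)" unfolding sgraph_def by simp
  then show "{num_copies VH EH {..<n} E | E :: nat set set. sgraph {..<n} E \<and> degenerate d {..<n} E} \<noteq> {}"
    using degenerate_empty by blast
qed

lemma ex_le:
  assumes "\<And>E :: nat set set. sgraph {..<n} E \<Longrightarrow> degenerate d {..<n} E \<Longrightarrow> num_copies VH EH {..<n} E \<le> K"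
  shows "ex_degen VH EH d n \<le> K"
  unfolding ex_degen_def using ex_set_props[of VH EH n d] assms by (subst Max_le_iff) auto

lemma ex_ge:
  assumes "sgraph {..<n} (E :: nat set set)" "degenerate d {..<n} E"
  shows "num_copies VH EH {..<n} E \<le> ex_degen VH EH d n"
  unfolding ex_degen_def using ex_set_props(1)[of VH EH n d] assms by (intro Max_ge) auto

lemma no_copies:
  assumes sH: "sgraph VH EH" and nd: "\<not> degenerate d VH EH" and dG: "degenerate d V E"
  shows "num_copies VH EH V E = 0"
proof -
  have emp: "{(V', E'). subgraph V' E' V E \<and> graph_iso VH EH V' E'} = {}"
  proof (rule ccontr)
    assume "{(V', E'). subgraph V' E' V E \<and> graph_iso VH EH V' E'} \<noteq> {}"
    then obtain V' E' where c: "subgraph V' E' V E" "graph_iso VH EH V' E'" by auto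
    obtain f where f: "bij_betw f VH V'" "\<forall>x\<in>VH. \<forall>y\<in>VH. {x,y} \<in> EH \<longleftrightarrow> {f x, f y} \<in> E'"
      using c(2) unfolding graph_iso_def by blast
    have d': "degenerate d V' E'" using degenerate_subgraph[OF c(1) dG] .
    have s': "sgraph V' E'" using c(1) unfolding subgraph_def by auto
    obtain V1 E1 where V1: "subgraph V1 E1 VH EH" "V1 \<noteq> {}" "\<forall>v\<in>V1. \<not> degree E1 v \<le> d"
      using nd unfolding degenerate_def by blast
    define \<phi> where "\<phi> = inv_into VH f"
    have injf: "inj_on f VH" using f(1) by (simp add: bij_betw_def)
    have fV: "f ` VH = V'" using f(1) by (simp add: bij_betw_def)
    have inj: "inj_on \<phi> V'" unfolding \<phi>_def using fV by (intro inj_on_inv_into) simp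
    have img: "\<phi> ` V' = VH" unfolding \<phi>_def using bij_betw_inv_into[OF f(1)] by (simp add: bij_betw_def)
    have "\<exists>v\<in>V1. degree E1 v \<le> d"
    proof (rule pull[OF inj d' s'])
      show "V1 \<subseteq> \<phi> ` V'" using V1(1) img unfolding subgraph_def by auto
      show "V1 \<noteq> {}" by (rule V1(2))
      show "sgraph V1 E1" using V1(1) unfolding subgraph_def by auto
      show "\<forall>e'\<in>E1. \<exists>e\<in>E'. e' = \<phi> ` e"
      proof
        fix e' assume e': "e' \<in> E1"
        then have "e' \<in> EH" using V1(1) unfolding subgraph_def by auto
        then have "e' \<subseteq> VH" "card e' = 2" using sH unfolding sgraph_def by auto
        then obtain x y where xy: "e' = {x,y}" "x \<in> VH" "y \<in> VH" by (metis card_2_iff insert_subset)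
        then have "{f x, f y} \<in> E'" using f(2) \<open>e' \<in> EH\<close> by auto
        moreover have "\<phi> ` {f x, f y} = {x,y}" unfolding \<phi>_def using xy injf by simp
        ultimately show "\<exists>e\<in>E'. e' = \<phi> ` e" using xy by metis
      qed
    qed
    then show False using V1(3) by blast
  qed
  show ?thesis unfolding num_copies_def emp by simp
qed

lemma div_bound:
  fixes n k :: nat
  assumes "n \<ge> 2 * (k + 1)"
  shows "real n \<le> 2 * real (k + 1) * real (n div (k + 1))"
proof -
  let ?q = "n div (k + 1)"
  have "0 < ?q" using assms by (subst div_greater_zero_iff) simp
  then have q1: "?q \<ge> 1" by simp
  define Q where "Q = ?q * (k + 1)"
  define M where "M = n mod (k + 1)"
  have "n = Q + M" unfolding Q_def M_def by (rule div_mult_mod_eq[symmetric])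
  moreover have "M < k + 1" unfolding M_def by simp
  moreover have "1 * (k + 1) \<le> Q" unfolding Q_def using q1 by (rule mult_le_mono1)
  ultimately have "n \<le> 2 * Q" by presburger
  moreover have "2 * (k + 1) * ?q = 2 * Q" unfolding Q_def by (simp only: ac_simps)
  ultimately have "n \<le> 2 * (k + 1) * ?q" by simp
  then have "real n \<le> real (2 * (k + 1) * ?q)" by (simp only: of_nat_le_iff)
  then show ?thesis by (simp only: of_nat_mult of_nat_numeral)
qed

theorem mainTheorem6:
  fixes d :: nat and VH :: "'b set" and EH :: "'b set set"
  assumes "sgraph VH EH"
  shows "(\<not> degenerate d VH EH \<longrightarrow> (\<forall>n. ex_degen VH EH d n = 0)) \<and>
         (degenerate d VH EH \<longrightarrow>
            (\<exists>c1 c2 :: real. c1 > 0 \<and> c2 > 0 \<and>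
               (\<forall>n::nat. n \<ge> 1 \<longrightarrow> real (ex_degen VH EH d n) \<le> c2 * real n ^ alpha_d d VH EH) \<and>
               (\<exists>N. \<forall>n::nat. n \<ge> N \<longrightarrow> real (ex_degen VH EH d n) \<ge> c1 * real n ^ alpha_d d VH EH)))"
proof (intro conjI impI)
  note sH = assms
  assume nd: "\<not> degenerate d VH EH"
  show "\<forall>n. ex_degen VH EH d n = 0"
  proof
    fix n
    have "ex_degen VH EH d n \<le> 0" by (rule ex_le) (simp add: no_copies[OF sH nd])
    then show "ex_degen VH EH d n = 0" by simp
  qed
next
  note sH = assms
  assume dH: "degenerate d VH EH"
  define k where "k = card VH"
  define \<alpha> where "\<alpha> = alpha_d d VH EH"
  define K where "K = 2 ^ k * (k * card (lstD d k)) ^ k"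
  have fVH: "finite VH" using sH unfolding sgraph_def by auto
  have up: "\<forall>n::nat. n \<ge> 1 \<longrightarrow> real (ex_degen VH EH d n) \<le> (real K + 1) * real n ^ \<alpha>"
  proof (intro allI impI)
    fix n :: nat assume n: "n \<ge> 1"
    have "ex_degen VH EH d n \<le> K * n ^ \<alpha>"
      by (rule ex_le) (use upper[OF sH _ _ n] in \<open>simp add: K_def k_def \<alpha>_def\<close>)
    then have "real (ex_degen VH EH d n) \<le> real K * real n ^ \<alpha>"
      by (metis of_nat_le_iff of_nat_mult of_nat_power)
    also have "\<dots> \<le> (real K + 1) * real n ^ \<alpha>" by (intro mult_right_mono) auto
    finally show "real (ex_degen VH EH d n) \<le> (real K + 1) * real n ^ \<alpha>" .
  qed
  let ?A = "{card S |S. S \<subseteq> VH \<and> (\<forall>x\<in>S. \<forall>y\<in>S. {x, y} \<notin> EH) \<and> (\<forall>x\<in>S. degree EH x \<le> d)}"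
  have "finite ?A"
  proof -
    have "?A \<subseteq> card ` Pow VH" by auto
    then show ?thesis using fVH by (meson finite_Pow_iff finite_imageI finite_subset)
  qed
  moreover have "?A \<noteq> {}" by auto
  ultimately have "\<alpha> \<in> ?A" unfolding \<alpha>_def alpha_d_def by (rule Max_in)
  then obtain S where S: "S \<subseteq> VH" "\<forall>x\<in>S. \<forall>y\<in>S. {x, y} \<notin> EH" "\<forall>x\<in>S. degree EH x \<le> d" "card S = \<alpha>"
    by auto
  define c1 :: real where "c1 = (1 / (2 * real (k + 1))) ^ \<alpha>"
  have lo: "\<forall>n::nat. n \<ge> 2 * (k + 1) \<longrightarrow> real (ex_degen VH EH d n) \<ge> c1 * real n ^ \<alpha>"
  proof (intro allI impI)
    fix n :: nat assume n: "n \<ge> 2 * (k + 1)"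
    define m where "m = n div (k + 1)"
    have "0 < m" unfolding m_def using n by (subst div_greater_zero_iff) simp
    then have m1: "m \<ge> 1" by simp
    define B where "B = blowB VH S m"
    define EB where "EB = blowE VH EH S m"
    have sB: "sgraph B EB" unfolding B_def EB_def by (rule blow_sgraph[OF sH])
    have dB: "degenerate d B EB" unfolding B_def EB_def by (rule blow_degen[OF sH dH S(1-3)])
    have cB: "m ^ \<alpha> \<le> num_copies VH EH B EB" unfolding B_def EB_def S(4)[symmetric]
      by (rule blow_copies[OF sH S(1,2)])
    have fB: "finite B" using sB unfolding sgraph_def by auto
    have "card B \<le> card (VH \<times> {..<m})" unfolding B_def
      by (rule card_mono) (use fVH blowB_sub[OF m1] in auto)
    also have "\<dots> = k * m" by (simp add: card_cartesian_product k_def)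
    also have "\<dots> \<le> (k + 1) * m" by simp
    also have "\<dots> \<le> n" unfolding m_def by (metis mult.commute div_times_less_eq_dividend)
    finally have cBn: "card B \<le> n" .
    obtain \<phi> where \<phi>: "bij_betw \<phi> B {0..<card B}" using ex_bij_betw_finite_nat[OF fB] by blast
    have inj: "inj_on \<phi> B" using \<phi> by (simp add: bij_betw_def)
    have sub: "\<phi> ` B \<subseteq> {..<n}" using \<phi> cBn by (auto simp: bij_betw_def)
    have sG: "sgraph {..<n} (image \<phi> ` EB)" by (rule transfer_sgraph[OF inj sB sub]) simp
    have dG: "degenerate d {..<n} (image \<phi> ` EB)" by (rule transfer_degen[OF inj sB sub _ dB]) simp
    have "m ^ \<alpha> \<le> num_copies VH EH {..<n} (image \<phi> ` EB)"
      using cB transfer_copies[OF inj sB sub] by (meson finite_lessThan order_trans)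
    also have "\<dots> \<le> ex_degen VH EH d n" by (rule ex_ge[OF sG dG])
    finally have ineq: "real m ^ \<alpha> \<le> real (ex_degen VH EH d n)"
      by (metis of_nat_le_iff of_nat_power)
    have "real n \<le> 2 * real (k + 1) * real m" unfolding m_def by (rule div_bound[OF n])
    then have "1 / (2 * real (k + 1)) * real n \<le> real m"
      by (simp add: field_simps)
    then have "(1 / (2 * real (k + 1)) * real n) ^ \<alpha> \<le> real m ^ \<alpha>"
      by (intro power_mono) auto
    moreover have "(1 / (2 * real (k + 1)) * real n) ^ \<alpha> = c1 * real n ^ \<alpha>"
      unfolding c1_def by (rule power_mult_distrib)
    ultimately have "c1 * real n ^ \<alpha> \<le> real m ^ \<alpha>" by simp
    then show "c1 * real n ^ \<alpha> \<le> real (ex_degen VH EH d n)" using ineq by linarith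
  qed
  have "c1 > 0" unfolding c1_def by simp
  moreover have "real K + 1 > 0" by simp
  ultimately show "\<exists>c1 c2 :: real. c1 > 0 \<and> c2 > 0 \<and>
               (\<forall>n::nat. n \<ge> 1 \<longrightarrow> real (ex_degen VH EH d n) \<le> c2 * real n ^ alpha_d d VH EH) \<and>
               (\<exists>N. \<forall>n::nat. n \<ge> N \<longrightarrow> real (ex_degen VH EH d n) \<ge> c1 * real n ^ alpha_d d VH EH)"
    using up lo unfolding \<alpha>_def by blast
qed

end
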